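(* Let $U=\{x\in\mathbb R^4:x^2+x^4>0\}$. A smooth covector field $A$ on $U$ satisfies $L_\xi A=0$ for $\xi\in\{e_{12}-e_{14},\,e_{23}+e_{34},\,e_{24},\,e_1,\,e_3,\,e_2-e_4\}$ if and only if there is a real constant $B$ with $$A=\Big(0,\ \frac{B}{x^2+x^4},\ 0,\ \frac{B}{x^2+x^4}\Big).$$
   Context: Work in $\mathbb R^4$ with Galilean (Cartesian) coordinates $x^1,x^2,x^3,x^4$ of Minkowski space (metric $\mathrm{diag}(-1,-1,-1,1)$). A potential on an open set $U\subseteq\mathbb R^4$ is a smooth covector field $A=A_i\,dx^i$; its components $A_i$ are always those with respect to the coordinates $x^i$, even when written as functions of other variables. For a vector field $\xi=\xi^k\partial_k$ the Lie derivative is $(L_\xi A)_i=\xi^k\partial_kA_i+A_k\partial_i\xi^k$. The vector fields used are, by components $(\xi^1,\xi^2,\xi^3,\xi^4)$: $e_1=(1,0,0,0)$, $e_2=(0,1,0,0)$, $e_3=(0,0,1,0)$, $e_4=(0,0,0,1)$, $e_{12}=(-x^2,x^1,0,0)$, $e_{13}=(x^3,0,-x^1,0)$, $e_{23}=(0,-x^3,x^2,0)$, $e_{14}=(x^4,0,0,x^1)$, $e_{24}=(0,x^4,0,x^2)$, $e_{34}=(0,0,x^4,x^3)$. A potential admits a family of vector fields if $L_\xi A=0$ for each $\xi$ in it (equivalently for every element of their linear span). "Functions" are smooth real functions; $\mathrm{ch}=\cosh$, $\mathrm{sh}=\sinh$. *)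

theory Defs
  imports "HOL-Analysis.Analysis"
begin

text \<open>Points of R^4 are elements of real^4. The Galilean coordinate x^k (k = 1..4)
  is the component at index idx k (the elements 0,1,2,3 of the index type 4).\<close>

definition idx :: "nat \<Rightarrow> 4" where
  "idx k = of_nat (k - 1)"

definition coord :: "nat \<Rightarrow> real^4 \<Rightarrow> real" where
  "coord k x = x $ idx k"

definition mk4 :: "real \<Rightarrow> real \<Rightarrow> real \<Rightarrow> real \<Rightarrow> real^4" where
  "mk4 a b c d = (\<chi> j. if j = idx 1 then a else if j = idx 2 then b
                       else if j = idx 3 then c else d)"

definition partial :: "4 \<Rightarrow> (real^4 \<Rightarrow> real) \<Rightarrow> real^4 \<Rightarrow> real" where
  "partial i f x = frechet_derivative f (at x) (axis i 1)"

fun Ck_on :: "nat \<Rightarrow> (real^4) set \<Rightarrow> (real^4 \<Rightarrow> real) \<Rightarrow> bool" where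
  "Ck_on 0 U f = continuous_on U f"
| "Ck_on (Suc k) U f = ((\<forall>x\<in>U. f differentiable (at x)) \<and> (\<forall>i. Ck_on k U (partial i f)))"

definition smooth_on :: "(real^4) set \<Rightarrow> (real^4 \<Rightarrow> real) \<Rightarrow> bool" where
  "smooth_on U f = (\<forall>k. Ck_on k U f)"

definition lie :: "(real^4 \<Rightarrow> real^4) \<Rightarrow> (real^4 \<Rightarrow> real^4) \<Rightarrow> real^4 \<Rightarrow> real^4" where
  "lie xi A x = (\<chi> i. \<Sum>k\<in>UNIV. xi x $ k * partial k (\<lambda>y. A y $ i) x
                                  + A x $ k * partial i (\<lambda>y. xi y $ k) x)"

definition e1 :: "real^4 \<Rightarrow> real^4" where "e1 x = mk4 1 0 0 0"
definition e2 :: "real^4 \<Rightarrow> real^4" where "e2 x = mk4 0 1 0 0"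
definition e3 :: "real^4 \<Rightarrow> real^4" where "e3 x = mk4 0 0 1 0"
definition e4 :: "real^4 \<Rightarrow> real^4" where "e4 x = mk4 0 0 0 1"
definition e12 :: "real^4 \<Rightarrow> real^4" where "e12 x = mk4 (- coord 2 x) (coord 1 x) 0 0"
definition e13 :: "real^4 \<Rightarrow> real^4" where "e13 x = mk4 (coord 3 x) 0 (- coord 1 x) 0"
definition e23 :: "real^4 \<Rightarrow> real^4" where "e23 x = mk4 0 (- coord 3 x) (coord 2 x) 0"
definition e14 :: "real^4 \<Rightarrow> real^4" where "e14 x = mk4 (coord 4 x) 0 0 (coord 1 x)"
definition e24 :: "real^4 \<Rightarrow> real^4" where "e24 x = mk4 0 (coord 4 x) 0 (coord 2 x)"
definition e34 :: "real^4 \<Rightarrow> real^4" where "e34 x = mk4 0 0 (coord 4 x) (coord 3 x)"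

end

theory Submission
  imports Defs
begin
lemma four0: "(4::4) = 0" by simp
lemma sum4: "(\<Sum>k\<in>(UNIV::4 set). f k) = f 0 + f 1 + f 2 + f 3"
  by (simp add: sum_4 four0 add_ac)
lemma all4: "(\<forall>i::4. P i) = (P 0 \<and> P 1 \<and> P 2 \<and> P 3)"
  by (metis UNIV_4 insertE UNIV_I empty_iff four0)
lemma idx_simps[simp]: "idx 1 = 0" "idx 2 = 1" "idx 3 = 2" "idx 4 = 3" by (simp_all add: idx_def)
lemma mk4_nth[simp]: "mk4 a b c d $ 0 = a" "mk4 a b c d $ 1 = b" "mk4 a b c d $ 2 = c" "mk4 a b c d $ 3 = d"
  by (simp_all add: mk4_def idx_def)
lemma vnth: "((\<lambda>y::real^4. y $ i) has_derivative (\<lambda>h. h $ i)) F"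
  by (rule bounded_linear_imp_has_derivative[OF bounded_linear_vec_nth])
lemma partial_at: "(f has_derivative f') (at x) \<Longrightarrow> partial i f x = f' (axis i 1)"
  unfolding partial_def by (metis frechet_derivative_at)
lemma partial_lin: "linear xi \<Longrightarrow> partial i (\<lambda>y. xi y $ k) x = xi (axis i 1) $ k"
proof -
  assume "linear xi"
  then have "bounded_linear (\<lambda>y. xi y $ k)"
    using bounded_linear_compose[OF bounded_linear_vec_nth] linear_conv_bounded_linear by blast
  then show ?thesis by (intro partial_at bounded_linear_imp_has_derivative)
qed
lemma aux: "(t::real) \<noteq> 0 \<Longrightarrow> B / t = t * (B / t^2)" by (simp add: power2_eq_square)
lemma partial_loc: "open U \<Longrightarrow> x \<in> U \<Longrightarrow> (\<And>y. y \<in> U \<Longrightarrow> f y = g y) \<Longrightarrow> (g has_derivative g') (at x) \<Longrightarrow> partial k f x = g' (axis k 1)"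
proof -
  assume a: "open U" "x \<in> U" "\<And>y. y \<in> U \<Longrightarrow> f y = g y" "(g has_derivative g') (at x)"
  have "(f has_derivative g') (at x)"
    by (rule has_derivative_transform_within_open[OF a(4) a(1) a(2)]) (simp add: a(3))
  then show ?thesis by (rule partial_at)
qed
lemma partial_const[simp]: "partial i (\<lambda>y. c) x = 0"
  using partial_at[OF has_derivative_const] by simp
lemma lin_expand: "linear (D :: real^4 \<Rightarrow> real) \<Longrightarrow> D h = (\<Sum>k\<in>UNIV. h$k * D (axis k 1))"
proof -
  assume L: "linear D"
  have "D h = D (\<Sum>k\<in>UNIV. h$k *s axis k 1)" by (simp add: basis_expansion)
  also have "\<dots> = (\<Sum>k\<in>UNIV. h$k * D (axis k 1))"
    by (simp add: linear_sum[OF L] linear_cmul[OF L] scalar_mult_eq_scaleR)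
  finally show ?thesis .
qed
lemma convU: "convex {x::real^4. x$1 + x$3 > 0}"
  unfolding convex_def
proof (intro ballI allI impI)
  fix x y :: "real^4" and u v :: real
  assume x: "x \<in> {x. x$1+x$3>0}" and y: "y \<in> {x. x$1+x$3>0}" and uv: "0 \<le> u" "0 \<le> v" "u + v = 1"
  have px: "x$1+x$3 > 0" and py: "y$1+y$3>0" using x y by auto
  have e: "(u *\<^sub>R x + v *\<^sub>R y)$1 + (u *\<^sub>R x + v *\<^sub>R y)$3 = u * (x$1+x$3) + v * (y$1+y$3)"
    by (simp add: algebra_simps)
  have "u * (x$1+x$3) + v * (y$1+y$3) > 0"
  proof (cases "u = 0")
    case True then show ?thesis using uv py by simp
  next
    case False then have "u > 0" using uv by simp
    then show ?thesis using px py uv by (simp add: add_pos_nonneg)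
  qed
  then show "u *\<^sub>R x + v *\<^sub>R y \<in> {x. x$1+x$3>0}" using e by simp
qed
lemma openU: "open {x::real^4. x$1 + x$3 > 0}"
  by (intro open_Collect_less continuous_intros)
lemma lin1: "linear (\<lambda>x. e12 x - e14 x)"
  by (intro linearI) (simp_all add: e12_def e14_def coord_def mk4_def vec_eq_iff algebra_simps)
lemma lin2: "linear (\<lambda>x. e23 x + e34 x)"
  by (intro linearI) (simp_all add: e23_def e34_def coord_def mk4_def vec_eq_iff algebra_simps)
lemma lin3: "linear e24"
  by (intro linearI) (simp_all add: e24_def coord_def mk4_def vec_eq_iff algebra_simps)
lemma dB: "((\<lambda>y::real^4. B / (y$1+y$3)) has_derivative (\<lambda>h. - (B*(h$1+h$3))/((x$1+x$3)^2))) (at x)"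
  if "x$1+x$3 > 0"
  using that by (auto intro!: derivative_eq_intros vnth simp: power2_eq_square field_simps)

theorem mainTheorem18:
  fixes A :: "real^4 \<Rightarrow> real^4"
  assumes smooth: "\<forall>k\<in>{1..4}. smooth_on {x. coord 2 x + coord 4 x > 0} (\<lambda>x. coord k (A x))"
  shows "(\<forall>xi\<in>{\<lambda>x. e12 x - e14 x, \<lambda>x. e23 x + e34 x, e24, e1, e3,
              \<lambda>x. e2 x - e4 x}.
            \<forall>x\<in>{x. coord 2 x + coord 4 x > 0}. lie xi A x = 0)
         \<longleftrightarrow> (\<exists>B::real. \<forall>x\<in>{x. coord 2 x + coord 4 x > 0}.
               A x = mk4 0 (B / (coord 2 x + coord 4 x)) 0 (B / (coord 2 x + coord 4 x)))"
proof -
  define U where "U = {x::real^4. x$1 + x$3 > 0}"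
  have UU: "{x. coord 2 x + coord 4 x > 0} = U" by (simp add: U_def coord_def)
  show ?thesis unfolding UU
  proof
    assume H: "\<forall>xi\<in>{\<lambda>x. e12 x - e14 x, \<lambda>x. e23 x + e34 x, e24, e1, e3,
              \<lambda>x. e2 x - e4 x}. \<forall>x\<in>U. lie xi A x = 0"
    have "A x $ 0 = 0 \<and> A x $ 2 = 0 \<and> A x $ 3 = A x $ 1 \<and> partial 0 (\<lambda>y. A y $ 1) x = 0
       \<and> partial 2 (\<lambda>y. A y $ 1) x = 0 \<and> partial 3 (\<lambda>y. A y $ 1) x = partial 1 (\<lambda>y. A y $ 1) x
       \<and> (x$1+x$3) * partial 1 (\<lambda>y. A y $ 1) x + A x $ 1 = 0" if xU: "x \<in> U" for x
    proof -
      have h1: "lie (\<lambda>x. e12 x - e14 x) A x = 0" and h2: "lie (\<lambda>x. e23 x + e34 x) A x = 0"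
        and h3: "lie e24 A x = 0" and h4: "lie e1 A x = 0" and h5: "lie e3 A x = 0"
        and h6: "lie (\<lambda>x. e2 x - e4 x) A x = 0" using H xU by auto
      note E = h1 h2 h3 h4 h5 h6
      note E2 = E[unfolded vec_eq_iff all4 lie_def sum4 partial_lin[OF lin1] partial_lin[OF lin2] partial_lin[OF lin3]]
      note E3 = E2[unfolded e12_def e14_def e23_def e34_def e24_def e1_def e2_def e3_def e4_def coord_def, simplified]
      have E4: "A x $ 0 = 0" "A x $ 2 = 0" "A x $ 3 = A x $ 1" "partial 0 (\<lambda>y. A y $ 1) x = 0"
        "partial 2 (\<lambda>y. A y $ 1) x = 0" "partial 3 (\<lambda>y. A y $ 1) x = partial 1 (\<lambda>y. A y $ 1) x"
        "x $ 3 * partial 1 (\<lambda>y. A y $ 1) x + x $ 1 * partial 3 (\<lambda>y. A y $ 1) x + A x $ 3 = 0"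
        using E3 by (simp_all add: axis_def idx_def)
      show ?thesis using E4 by (simp add: algebra_simps)
    qed
    note K = this
    have diff: "(\<lambda>y. A y $ 1) differentiable (at x)" if "x \<in> U" for x
    proof -
      have "smooth_on U (\<lambda>x. coord 2 (A x))" using smooth UU by auto
      then have "Ck_on (Suc 0) U (\<lambda>x. coord 2 (A x))" unfolding smooth_on_def by blast
      then show ?thesis using that by (simp add: coord_def)
    qed
    have deriv: "((\<lambda>y. (y$1+y$3) * A y $ 1) has_derivative (\<lambda>h. 0)) (at x within U)" if xU: "x \<in> U" for x
    proof -
      define D where "D = frechet_derivative (\<lambda>y. A y $ 1) (at x)"
      have dA: "((\<lambda>y. A y $ 1) has_derivative D) (at x)"
        using diff[OF xU] unfolding D_def by (simp add: frechet_derivative_works)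
      have linD: "linear D" using has_derivative_linear[OF dA] .
      have Pk: "partial k (\<lambda>y. A y $ 1) x = D (axis k 1)" for k by (simp add: partial_def D_def)
      have Dh: "D h = (h$1+h$3) * partial 1 (\<lambda>y. A y $ 1) x" for h
        using lin_expand[OF linD, of h] K[OF xU] unfolding sum4 Pk by (simp add: algebra_simps)
      have dd: "((\<lambda>y. (y$1+y$3) * A y $ 1) has_derivative (\<lambda>h. (x$1+x$3) * D h + (h$1+h$3) * A x $ 1)) (at x)"
        by (rule has_derivative_mult[OF has_derivative_add[OF vnth vnth] dA])
      have eq: "(\<lambda>h. (x$1+x$3) * D h + (h$1+h$3) * A x $ 1) = (\<lambda>h. 0)"
      proof
        fix h
        have "(x$1+x$3) * D h + (h$1+h$3) * A x $ 1 = (h$1+h$3) * ((x$1+x$3) * partial 1 (\<lambda>y. A y $ 1) x + A x $ 1)"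
          unfolding Dh by (simp add: algebra_simps)
        then show "(x$1+x$3) * D h + (h$1+h$3) * A x $ 1 = 0" using K[OF xU] by simp
      qed
      show ?thesis using has_derivative_at_withinI[OF dd[unfolded eq]] .
    qed
    obtain c where c: "\<forall>x\<in>U. (x$1+x$3) * A x $ 1 = c"
      using has_derivative_zero_constant[OF convU[folded U_def] deriv] by blast
    show "\<exists>B. \<forall>x\<in>U. A x = mk4 0 (B / (coord 2 x + coord 4 x)) 0 (B / (coord 2 x + coord 4 x))"
    proof (intro exI ballI)
      fix x assume xU: "x \<in> U"
      then have s: "x$1+x$3 > 0" by (simp add: U_def)
      have a1: "A x $ 1 = c / (x$1+x$3)" 
      proof -
        have "(x$1+x$3) * A x $ 1 = c" using c xU by blast
        then show ?thesis using s by (simp add: eq_divide_eq mult.commute)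
      qed
      show "A x = mk4 0 (c / (coord 2 x + coord 4 x)) 0 (c / (coord 2 x + coord 4 x))"
        unfolding vec_eq_iff all4 using K[OF xU] a1 by (simp add: coord_def)
    qed
  next
    assume "\<exists>B. \<forall>x\<in>U. A x = mk4 0 (B / (coord 2 x + coord 4 x)) 0 (B / (coord 2 x + coord 4 x))"
    then obtain B where hB: "\<forall>x\<in>U. A x = mk4 0 (B / (x$1+x$3)) 0 (B / (x$1+x$3))"
      by (auto simp: coord_def)
    have oU: "open U" unfolding U_def by (rule openU)
    have L: "lie xi A x = 0" if xU: "x \<in> U" and xi: "xi \<in> {\<lambda>x. e12 x - e14 x, \<lambda>x. e23 x + e34 x, e24, e1, e3, \<lambda>x. e2 x - e4 x}" for x xi
    proof -
      have s: "x$1+x$3 > 0" using xU by (simp add: U_def)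
      have Ax: "A x = mk4 0 (B / (x$1+x$3)) 0 (B / (x$1+x$3))" using hB xU by blast
      have P0: "partial k (\<lambda>y. A y $ 0) x = 0" for k
        by (rule partial_loc[OF oU xU _ has_derivative_const]) (simp add: hB)
      have P2: "partial k (\<lambda>y. A y $ 2) x = 0" for k
        by (rule partial_loc[OF oU xU _ has_derivative_const]) (simp add: hB)
      have P1: "partial k (\<lambda>y. A y $ 1) x = - (B*(axis k 1 $ 1 + axis k 1 $ 3))/((x$1+x$3)^2)" for k
        by (rule partial_loc[OF oU xU _ dB[OF s, of B]]) (simp add: hB)
      have P3: "partial k (\<lambda>y. A y $ 3) x = - (B*(axis k 1 $ 1 + axis k 1 $ 3))/((x$1+x$3)^2)" for k
        by (rule partial_loc[OF oU xU _ dB[OF s, of B]]) (simp add: hB)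
      have sne: "x$1+x$3 \<noteq> 0" using s by simp
      define q where "q = B/((x$1+x$3)^2)"
      have Bq: "B / (x$1+x$3) = (x$1+x$3) * q" unfolding q_def using aux[OF sne] .
      have Ax': "A x = mk4 0 ((x$1+x$3) * q) 0 ((x$1+x$3) * q)" using Ax Bq by simp
      have P1': "partial k (\<lambda>y. A y $ 1) x = - q * (axis k 1 $ 1 + axis k 1 $ 3)" for k
        unfolding P1 q_def by simp
      have P3': "partial k (\<lambda>y. A y $ 3) x = - q * (axis k 1 $ 1 + axis k 1 $ 3)" for k
        unfolding P3 q_def by simp
      show ?thesis using xi
        apply (elim insertE emptyE)
        apply (simp_all only: vec_eq_iff all4 lie_def sum4 partial_lin[OF lin1] partial_lin[OF lin2] partial_lin[OF lin3])
        apply (simp_all add: e12_def e14_def e23_def e34_def e24_def e1_def e2_def e3_def e4_def coord_def axis_def idx_def P0 P1' P2 P3' Ax')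
        apply (simp_all add: algebra_simps)
        done
    qed
    show "\<forall>xi\<in>{\<lambda>x. e12 x - e14 x, \<lambda>x. e23 x + e34 x, e24, e1, e3, \<lambda>x. e2 x - e4 x}. \<forall>x\<in>U. lie xi A x = 0"
      using L by blast
  qed
qed
end
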